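(* For $A,x\in\mathbb{R}$ define $E_0(A,x):=1$, $E_1(A,x):=e^{(1-x)A}$ and, for $n\ge2$, \[ E_n(A,x):=\begin{cases} \exp\!\Big(\big[x(E_1+E_3+\cdots+E_{n-1})-\tfrac n2\big]A\Big), & n \text{ even},\\[4pt] \exp\!\Big(\big[\tfrac{n+1}{2}-x(E_0+E_2+\cdots+E_{n-1})\big]A\Big), & n\text{ odd},\end{cases} \] with all $E_j$ evaluated at $(A,x)$. Define $\varphi_1(A,x):=x-1$, $\varphi_n(A,x):=\varphi_{n-1}(A,x)-1+xE_{n-1}(A,x)$ for $n\ge2$, and the polynomial $p_n(A):=\frac{\partial\varphi_n}{\partial x}(A,1)$. Then: (i) for every $n\ge2$, the positive roots of $p_{2n}$ are separated by the positive roots of $p_{2n-1}$, and the positive roots of $p_{2n+1}$ are separated by the positive roots of $p_{2n}$ that are less than $2$; (ii) for every $n\ge1$, the even polynomials $\frac{p_{2n}(A)}{2-A}$ and $p_{2n-1}(A)$ each have exactly $n-1$ positive roots; consequently, since they are even of degree $2n-2$, they also have $n-1$ negative roots, and all their roots are real and simple.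
   Context: Given two finite sets $R_1,R_2\subset\mathbb{R}$ (here, sets of roots), "$R_1$ is separated by $R_2$" means: all elements of $R_2$ lie between the minimal and maximal elements of $R_1$, and between any two consecutive elements of $R_2$ there... more precisely, any interval formed by a pair of consecutive elements of $R_1$ contains exactly one element of $R_2$ (i.e. the elements of $R_1$ and $R_2$ interlace, with $R_1$ having the extreme elements). For $n\ge1$, $2-A$ divides $p_{2n}(A)$, so $\frac{p_{2n}(A)}{2-A}$ is a polynomial. *)

theory Defs
  imports "HOL-Analysis.Analysis" "HOL-Computational_Algebra.Polynomial"
begin

fun E :: "nat \<Rightarrow> real \<Rightarrow> real \<Rightarrow> real" where
  "E n A x =
     (if n = 0 then 1
      else if n = 1 then exp ((1 - x) * A)
      else if even n then
        exp ((x * (\<Sum>j\<in>{j. j < n \<and> odd j}. E j A x) - real n / 2) * A)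
      else
        exp (((real n + 1) / 2 - x * (\<Sum>j\<in>{j. j < n \<and> even j}. E j A x)) * A))"

text \<open>phi_n(A,x) for n >= 1 (the value at n = 0 is an unused dummy).\<close>
fun phi :: "nat \<Rightarrow> real \<Rightarrow> real \<Rightarrow> real" where
  "phi 0 A x = 0"
| "phi (Suc 0) A x = x - 1"
| "phi (Suc (Suc n)) A x = phi (Suc n) A x - 1 + x * E (Suc n) A x"

definition p :: "nat \<Rightarrow> real \<Rightarrow> real" where
  "p n A = deriv (\<lambda>x. phi n A x) 1"

definition separated_by :: "real set \<Rightarrow> real set \<Rightarrow> bool" where
  "separated_by R1 R2 \<longleftrightarrow>
     finite R1 \<and> finite R2 \<and> R1 \<inter> R2 = {} \<and>
     (\<forall>r\<in>R2. \<exists>a\<in>R1. \<exists>b\<in>R1. a < r \<and> r < b) \<and>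
     (\<forall>a\<in>R1. \<forall>b\<in>R1. a < b \<and> R1 \<inter> {a<..<b} = {} \<longrightarrow>
        card (R2 \<inter> {a<..<b}) = 1)"

definition even_real_simple_roots :: "real poly \<Rightarrow> nat \<Rightarrow> bool" where
  "even_real_simple_roots Q n \<longleftrightarrow>
     Q \<noteq> 0 \<and> (\<forall>A. poly Q (- A) = poly Q A) \<and> degree Q = 2 * n - 2 \<and>
     card {A. 0 < A \<and> poly Q A = 0} = n - 1 \<and>
     card {A. A < 0 \<and> poly Q A = 0} = n - 1 \<and>
     (\<forall>z. poly (map_poly complex_of_real Q) z = 0 \<longrightarrow>
        Im z = 0 \<and> order z (map_poly complex_of_real Q) = 1)"

end

theory Submission
  imports Defs
begin


lemma card_odd_lt: "card {j::nat. j < n \<and> odd j} = n div 2"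
proof (induction n)
  case 0 then show ?case by simp
next
  case (Suc n)
  have "{j. j < Suc n \<and> odd j} = (if odd n then insert n {j. j < n \<and> odd j} else {j. j < n \<and> odd j})"
    by (auto simp: less_Suc_eq)
  then show ?case using Suc by (auto simp: card_insert_if)
qed

lemma card_even_lt: "card {j::nat. j < n \<and> even j} = (n + 1) div 2"
proof (induction n)
  case 0 then show ?case by simp
next
  case (Suc n)
  have "{j. j < Suc n \<and> even j} = (if even n then insert n {j. j < n \<and> even j} else {j. j < n \<and> even j})"
    by (auto simp: less_Suc_eq)
  then show ?case using Suc by (auto simp: card_insert_if)
qed

declare E.simps[simp del]

lemma E_even: "even n \<Longrightarrow> n \<ge> 2 \<Longrightarrow>
  E n A x = exp ((x * (\<Sum>j\<in>{j. j < n \<and> odd j}. E j A x) - real n / 2) * A)"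
  by (subst E.simps) auto

lemma E_odd: "odd n \<Longrightarrow> n \<ge> 2 \<Longrightarrow>
  E n A x = exp (((real n + 1) / 2 - x * (\<Sum>j\<in>{j. j < n \<and> even j}. E j A x)) * A)"
  by (subst E.simps) auto

lemma E_0: "E 0 A x = 1" by (subst E.simps) auto
lemma E_1: "E (Suc 0) A x = exp ((1 - x) * A)" by (subst E.simps) auto

lemma E_at1: "E n A 1 = 1"
proof (induction n rule: less_induct)
  case (less n)
  consider "n = 0" | "n = 1" | "n \<ge> 2" "even n" | "n \<ge> 2" "odd n" by linarith
  then show ?case
  proof cases
    case 1 then show ?thesis by (simp add: E_0)
  next
    case 2 then show ?thesis by (simp add: E_1)
  next
    case 3
    have "(\<Sum>j\<in>{j. j < n \<and> odd j}. E j A 1) = (\<Sum>j\<in>{j. j < n \<and> odd j}. 1)"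
      by (rule sum.cong) (auto intro: less)
    also have "\<dots> = real (n div 2)" by (simp add: card_odd_lt)
    also have "\<dots> = real n / 2" using 3 by (auto elim!: evenE)
    finally show ?thesis using 3 by (simp add: E_even)
  next
    case 4
    have "(\<Sum>j\<in>{j. j < n \<and> even j}. E j A 1) = (\<Sum>j\<in>{j. j < n \<and> even j}. 1)"
      by (rule sum.cong) (auto intro: less)
    also have "\<dots> = real ((n+1) div 2)" by (simp add: card_even_lt)
    also have "\<dots> = (real n + 1) / 2" using 4 by (auto elim!: oddE)
    finally show ?thesis using 4 by (simp add: E_odd)
  qed
qed

lemma exp_deriv_aux1:
  assumes "(S has_real_derivative s') (at 1)"
  shows "((\<lambda>x. exp ((x * S x - c) * A)) has_real_derivative exp ((1 * S 1 - c) * A) * ((S 1 + 1 * s') * A)) (at 1)"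
  by (auto intro!: derivative_eq_intros assms)

lemma exp_deriv_aux2:
  assumes "(S has_real_derivative s') (at 1)"
  shows "((\<lambda>x. exp ((c - x * S x) * A)) has_real_derivative exp ((c - 1 * S 1) * A) * ((- (S 1 + 1 * s')) * A)) (at 1)"
  by (auto intro!: derivative_eq_intros assms)

fun D :: "nat \<Rightarrow> real \<Rightarrow> real" where
  "D n A =
     (if n = 0 then 0
      else if n = 1 then - A
      else if even n then (real n / 2 + (\<Sum>j\<in>{j. j < n \<and> odd j}. D j A)) * A
      else - (((real n + 1) / 2 + (\<Sum>j\<in>{j. j < n \<and> even j}. D j A)) * A))"

declare D.simps[simp del]

lemma E_deriv: "((\<lambda>x. E n A x) has_real_derivative D n A) (at 1)"
proof (induction n rule: less_induct)
  case (less n)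
  consider "n = 0" | "n = 1" | "n \<ge> 2" "even n" | "n \<ge> 2" "odd n" by linarith
  then show ?case
  proof cases
    case 1 then show ?thesis by (simp add: E_0 D.simps)
  next
    case 2
    have "((\<lambda>x. exp ((1 - x) * A)) has_real_derivative exp ((1 - 1) * A) * (- A)) (at 1)"
      by (auto intro!: derivative_eq_intros)
    then show ?thesis using 2 by (simp add: E_1 D.simps)
  next
    case 3
    let ?S = "{j. j < n \<and> odd j}"
    have S: "((\<lambda>x. \<Sum>j\<in>?S. E j A x) has_real_derivative (\<Sum>j\<in>?S. D j A)) (at 1)"
    proof (rule DERIV_sum)
      fix j assume "j \<in> ?S" then have "j < n" by simp
      then show "((\<lambda>x. E j A x) has_real_derivative D j A) (at 1)" by (rule less)
    qed
    have S1: "(\<Sum>j\<in>?S. E j A 1) = real n / 2"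
    proof -
      have "(\<Sum>j\<in>?S. E j A 1) = (\<Sum>j\<in>?S. 1)" by (simp add: E_at1)
      also have "\<dots> = real (n div 2)" by (simp add: card_odd_lt)
      also have "\<dots> = real n / 2" using 3 by (auto elim!: evenE)
      finally show ?thesis .
    qed
    have "((\<lambda>x. exp ((x * (\<Sum>j\<in>?S. E j A x) - real n / 2) * A)) has_real_derivative
       exp ((1 * (\<Sum>j\<in>?S. E j A 1) - real n / 2) * A) * (((\<Sum>j\<in>?S. E j A 1) + 1 * (\<Sum>j\<in>?S. D j A)) * A)) (at 1)"
      by (rule exp_deriv_aux1[OF S])
    then show ?thesis using 3 S1 by (simp add: E_even D.simps[of n])
  next
    case 4
    let ?S = "{j. j < n \<and> even j}"
    have S: "((\<lambda>x. \<Sum>j\<in>?S. E j A x) has_real_derivative (\<Sum>j\<in>?S. D j A)) (at 1)"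
    proof (rule DERIV_sum)
      fix j assume "j \<in> ?S" then have "j < n" by simp
      then show "((\<lambda>x. E j A x) has_real_derivative D j A) (at 1)" by (rule less)
    qed
    have S1: "(\<Sum>j\<in>?S. E j A 1) = (real n + 1) / 2"
    proof -
      have "(\<Sum>j\<in>?S. E j A 1) = (\<Sum>j\<in>?S. 1)" by (simp add: E_at1)
      also have "\<dots> = real ((n+1) div 2)" by (simp add: card_even_lt)
      also have "\<dots> = (real n + 1) / 2" using 4 by (auto elim!: oddE)
      finally show ?thesis .
    qed
    have "((\<lambda>x. exp (((real n + 1) / 2 - x * (\<Sum>j\<in>?S. E j A x)) * A)) has_real_derivative
       exp (((real n + 1) / 2 - 1 * (\<Sum>j\<in>?S. E j A 1)) * A) * ((- ((\<Sum>j\<in>?S. E j A 1) + 1 * (\<Sum>j\<in>?S. D j A))) * A)) (at 1)"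
      by (rule exp_deriv_aux2[OF S])
    then show ?thesis using 4 S1 by (simp add: E_odd D.simps[of n] algebra_simps)
  qed
qed

fun pd :: "nat \<Rightarrow> real \<Rightarrow> real" where
  "pd 0 A = 0"
| "pd (Suc 0) A = 1"
| "pd (Suc (Suc n)) A = pd (Suc n) A + 1 + D (Suc n) A"

lemma phi_deriv: "((\<lambda>x. phi n A x) has_real_derivative pd n A) (at 1)"
proof (induction n A rule: pd.induct)
  case (1 A) then show ?case by simp
next
  case (2 A)
  show ?case by (auto intro!: derivative_eq_intros)
next
  case (3 n A)
  have "((\<lambda>x. phi (Suc n) A x - 1 + x * E (Suc n) A x) has_real_derivative
     pd (Suc n) A - 0 + (1 * E (Suc n) A 1 + 1 * D (Suc n) A)) (at 1)"
    by (auto intro!: derivative_eq_intros 3 E_deriv)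
  then show ?case by (simp add: E_at1 add.assoc)
qed

lemma p_pd: "p n A = pd n A"
  unfolding p_def by (rule DERIV_imp_deriv[OF phi_deriv])



fun Qp :: "nat \<Rightarrow> real poly" where
  "Qp 0 = 0"
| "Qp (Suc 0) = 1"
| "Qp (Suc (Suc n)) = [:2, 0, -1:] * Qp (Suc n) - Qp n"

fun Pp :: "nat \<Rightarrow> real poly" where
  "Pp 0 = -1"
| "Pp (Suc 0) = 1"
| "Pp (Suc (Suc n)) = [:2, 0, -1:] * Pp (Suc n) - Pp n"

lemma poly_Qp_rec: "poly (Qp (Suc (Suc n))) A = (2 - A^2) * poly (Qp (Suc n)) A - poly (Qp n) A"
  by (simp add: algebra_simps power2_eq_square)

lemma poly_Pp_rec: "poly (Pp (Suc (Suc n))) A = (2 - A^2) * poly (Pp (Suc n)) A - poly (Pp n) A"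
  by (simp add: algebra_simps power2_eq_square)

lemma T_identity: "A^2 * (\<Sum>i\<in>{1..m}. poly (Qp i) A) = 1 + poly (Qp m) A - poly (Qp (Suc m)) A"
proof (induction m)
  case 0 then show ?case by simp
next
  case (Suc m)
  have "A^2 * (\<Sum>i\<in>{1..Suc m}. poly (Qp i) A) = A^2 * (\<Sum>i\<in>{1..m}. poly (Qp i) A) + A^2 * poly (Qp (Suc m)) A"
    by (simp add: algebra_simps)
  then show ?case using Suc by (simp only: poly_Qp_rec) (simp add: algebra_simps)
qed

lemma P_Q2: "poly (Pp (Suc m)) A = poly (Qp m) A + poly (Qp (Suc m)) A \<and>
  poly (Pp (Suc (Suc m))) A = poly (Qp (Suc m)) A + poly (Qp (Suc (Suc m))) A"
proof (induction m)
  case 0 then show ?case by (simp add: algebra_simps)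
next
  case (Suc m)
  have h1: "poly (Pp (Suc m)) A = poly (Qp m) A + poly (Qp (Suc m)) A"
   and h2: "poly (Pp (Suc (Suc m))) A = poly (Qp (Suc m)) A + poly (Qp (Suc (Suc m))) A" using Suc.IH by blast+
  have e1: "poly (Pp (Suc (Suc (Suc m)))) A = (2 - A^2) * poly (Pp (Suc (Suc m))) A - poly (Pp (Suc m)) A"
    by (rule poly_Pp_rec)
  have e2: "poly (Qp (Suc (Suc (Suc m)))) A = (2 - A^2) * poly (Qp (Suc (Suc m))) A - poly (Qp (Suc m)) A"
    by (rule poly_Qp_rec)
  have e3: "poly (Qp (Suc (Suc m))) A = (2 - A^2) * poly (Qp (Suc m)) A - poly (Qp m) A"
    by (rule poly_Qp_rec)
  show ?case
    by (rule conjI[OF h2]) (simp only: e1 h1 h2 e2 e3, simp add: algebra_simps)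
qed

lemma P_Q: "poly (Pp (Suc m)) A = poly (Qp m) A + poly (Qp (Suc m)) A"
  using P_Q2 by blast

definition SO :: "nat \<Rightarrow> real \<Rightarrow> real" where
  "SO n A = (\<Sum>j\<in>{j. j < n \<and> odd j}. D j A)"
definition SE :: "nat \<Rightarrow> real \<Rightarrow> real" where
  "SE n A = (\<Sum>j\<in>{j. j < n \<and> even j}. D j A)"

lemma SO_Suc: "SO (Suc n) A = SO n A + (if odd n then D n A else 0)"
proof -
  have "{j. j < Suc n \<and> odd j} = (if odd n then insert n {j. j < n \<and> odd j} else {j. j < n \<and> odd j})"
    by (auto simp: less_Suc_eq)
  then show ?thesis unfolding SO_def by auto
qed

lemma SE_Suc: "SE (Suc n) A = SE n A + (if even n then D n A else 0)"
proof -
  have "{j. j < Suc n \<and> even j} = (if even n then insert n {j. j < n \<and> even j} else {j. j < n \<and> even j})"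
    by (auto simp: less_Suc_eq)
  then show ?thesis unfolding SE_def by auto
qed

lemma SO_0: "SO 0 A = 0" by (simp add: SO_def)
lemma SE_0: "SE 0 A = 0" by (simp add: SE_def)

lemma D_odd: "D (2*m+1) A = - ((real m + 1 + SE (2*m+1) A) * A)"
proof (cases m)
  case 0 then show ?thesis by (simp add: D.simps SE_Suc SE_0)
next
  case (Suc k)
  then show ?thesis by (subst D.simps) (simp add: SE_def algebra_simps)
qed

lemma D_even: "D (2*m+2) A = (real m + 1 + SO (2*m+2) A) * A"
  by (subst D.simps) (simp add: SO_def algebra_simps)

lemma pd_sum: "pd n A = real n + SO n A + SE n A"
proof (induction n A rule: pd.induct)
  case (1 A) then show ?case by (simp add: SO_0 SE_0)
next
  case (2 A) then show ?case by (simp add: SO_Suc SE_Suc SO_0 SE_0 D.simps)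
next
  case (3 n A)
  then show ?case by (simp add: SO_Suc[of "Suc n"] SE_Suc[of "Suc n"])
qed

lemma invariant:
  "SO (2*m) A = poly (Qp m) A - A * (\<Sum>i\<in>{1..m}. poly (Qp i) A) - real m \<and>
   SE (2*m+1) A = poly (Qp (Suc m)) A + A * (\<Sum>i\<in>{1..m}. poly (Qp i) A) - real m - 1"
proof (induction m)
  case 0 then show ?case by (simp add: SO_0 SE_Suc SE_0 D.simps)
next
  case (Suc m)
  let ?T = "\<Sum>i\<in>{1..m}. poly (Qp i) A"
  have T1: "A^2 * ?T = 1 + poly (Qp m) A - poly (Qp (Suc m)) A" by (rule T_identity)
  have T2: "A^2 * (?T + poly (Qp (Suc m)) A) = 1 + poly (Qp (Suc m)) A - poly (Qp (Suc (Suc m))) A"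
    using T_identity[of A "Suc m"] by simp
  have so: "SO (2 * Suc m) A = SO (2*m) A + D (2*m+1) A"
    using SO_Suc[of "2*m+1" A] SO_Suc[of "2*m" A] by simp
  have se: "SE (2 * Suc m + 1) A = SE (2*m+1) A + D (2*m+2) A"
    using SE_Suc[of "2*m+2" A] SE_Suc[of "2*m+1" A] by simp
  have so2: "SO (2 * m + 2) A = SO (2 * Suc m) A" by simp
  have A1: "SO (2 * Suc m) A = poly (Qp (Suc m)) A - A * (?T + poly (Qp (Suc m)) A) - real (Suc m)"
    unfolding so D_odd using Suc.IH T1
    by (simp add: algebra_simps power2_eq_square)
  show ?case
  proof
    show "SO (2 * Suc m) A = poly (Qp (Suc m)) A - A * (\<Sum>i\<in>{1..Suc m}. poly (Qp i) A) - real (Suc m)"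
      using A1 by simp
    show "SE (2 * Suc m + 1) A = poly (Qp (Suc (Suc m))) A + A * (\<Sum>i\<in>{1..Suc m}. poly (Qp i) A) - real (Suc m) - 1"
      unfolding se D_even so2 A1 using Suc.IH T2
      by (simp add: algebra_simps power2_eq_square)
  qed
qed

lemma pd_odd: "pd (2*m+1) A = poly (Pp (Suc m)) A"
proof -
  have "SO (2*m+1) A = SO (2*m) A" using SO_Suc[of "2*m" A] by simp
  then show ?thesis using invariant[of m A] by (simp add: pd_sum P_Q)
qed

lemma pd_even: "pd (2*m+2) A = (2 - A) * poly (Qp (Suc m)) A"
proof -
  have a: "SE (2*m+2) A = SE (2*m+1) A" using SE_Suc[of "2*m+1" A] by simp
  have b: "SO (2*m+2) A = SO (2*(Suc m)) A" by simp
  show ?thesis unfolding pd_sum a b using invariant[of m A] invariant[of "Suc m" A]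
    by (simp add: algebra_simps)
qed



declare Qp.simps(3)[simp del] Pp.simps(3)[simp del]

lemma rec_degree:
  fixes R :: "nat \<Rightarrow> real poly"
  assumes rec: "\<And>n. R (Suc (Suc n)) = [:2, 0, -1:] * R (Suc n) - R n"
    and r1: "R (Suc 0) = 1" and r0: "degree (R 0) = 0"
  shows "degree (R (Suc n)) = 2 * n \<and> coeff (R (Suc n)) (2 * n) = (-1) ^ n"
proof (induction n rule: less_induct)
  case (less n)
  show ?case
  proof (cases n)
    case 0 then show ?thesis using r1 by simp
  next
    case (Suc k)
    have IH: "degree (R (Suc k)) = 2 * k" "coeff (R (Suc k)) (2 * k) = (-1) ^ k"
      using less[of k] Suc by auto
    have Yd: "degree (R k) < 2 * k + 2"
    proof (cases k)
      case 0 then show ?thesis using r0 by simp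
    next
      case (Suc j) then show ?thesis using less[of j] \<open>n = Suc k\<close> by auto
    qed
    let ?t = "[:2, 0, -1:] :: real poly"
    have X0: "R (Suc k) \<noteq> 0" using IH by auto
    have t0: "?t \<noteq> 0" by simp
    have dt: "degree ?t = 2" by simp
    have dM: "degree (?t * R (Suc k)) = 2 * k + 2" using degree_mult_eq[OF t0 X0] IH dt by simp
    have cM: "coeff (?t * R (Suc k)) (2 * k + 2) = (-1) ^ Suc k"
      using coeff_mult_degree_sum[of ?t "R (Suc k)"] IH dt by simp
    have cY: "coeff (R k) (2 * k + 2) = 0" using Yd by (simp add: coeff_eq_0)
    have c: "coeff (R (Suc (Suc k))) (2 * k + 2) = (-1) ^ Suc k"
      unfolding rec using cM cY by simp
    have le: "degree (R (Suc (Suc k))) \<le> 2 * k + 2"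
      unfolding rec using degree_diff_le_max[of "?t * R (Suc k)" "R k"] dM Yd by simp
    have ge: "degree (R (Suc (Suc k))) \<ge> 2 * k + 2"
      by (rule le_degree) (use c in simp)
    show ?thesis using le ge c Suc by simp
  qed
qed

lemma rec_even:
  fixes R :: "nat \<Rightarrow> real poly"
  assumes rec: "\<And>n. R (Suc (Suc n)) = [:2, 0, -1:] * R (Suc n) - R n"
    and e0: "\<And>x. poly (R 0) (-x) = poly (R 0) x" and e1: "\<And>x. poly (R (Suc 0)) (-x) = poly (R (Suc 0)) x"
  shows "poly (R n) (-x) = poly (R n) x \<and> poly (R (Suc n)) (-x) = poly (R (Suc n)) x"
proof (induction n)
  case 0 then show ?case using e0 e1 by simp
next
  case (Suc n)
  then show ?case unfolding rec by simp
qed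

lemma Qp_props: "degree (Qp (Suc m)) = 2 * m" "Qp (Suc m) \<noteq> 0" "poly (Qp n) (-x) = poly (Qp n) x"
proof -
  have r: "degree (Qp (Suc m)) = 2 * m \<and> coeff (Qp (Suc m)) (2 * m) = (-1) ^ m"
    by (rule rec_degree) (auto simp: Qp.simps)
  then show "degree (Qp (Suc m)) = 2 * m" by simp
  from r show "Qp (Suc m) \<noteq> 0" by auto
  show "poly (Qp n) (-x) = poly (Qp n) x"
    using rec_even[of Qp] by (auto simp: Qp.simps)
qed

lemma Pp_props: "degree (Pp (Suc m)) = 2 * m" "Pp (Suc m) \<noteq> 0" "poly (Pp n) (-x) = poly (Pp n) x"
proof -
  have r: "degree (Pp (Suc m)) = 2 * m \<and> coeff (Pp (Suc m)) (2 * m) = (-1) ^ m"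
    by (rule rec_degree) (auto simp: Pp.simps)
  then show "degree (Pp (Suc m)) = 2 * m" by simp
  from r show "Pp (Suc m) \<noteq> 0" by auto
  show "poly (Pp n) (-x) = poly (Pp n) x"
    using rec_even[of Pp] by (auto simp: Pp.simps)
qed

lemma sin_rec: "sin ((x::real) + u) = 2 * cos u * sin x - sin (x - u)"
  by (simp add: sin_add sin_diff algebra_simps)

lemma two_minus_sq: "2 - (2 * sin (a::real))^2 = 2 * cos (2 * a)"
  by (simp add: cos_double_sin power_mult_distrib)

lemma Q_trig: "poly (Qp n) (2 * sin a) * sin (2 * a) = sin (2 * real n * a) \<and>
  poly (Qp (Suc n)) (2 * sin a) * sin (2 * a) = sin (2 * real (Suc n) * a)"
proof (induction n)
  case 0 then show ?case by simp
next
  case (Suc n)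
  have IH1: "poly (Qp n) (2 * sin a) * sin (2 * a) = sin (2 * real n * a)"
   and IH2: "poly (Qp (Suc n)) (2 * sin a) * sin (2 * a) = sin (2 * real (Suc n) * a)" using Suc by blast+
  have s: "sin (2 * real (Suc (Suc n)) * a) = 2 * cos (2 * a) * sin (2 * real (Suc n) * a) - sin (2 * real n * a)"
  proof -
    have "2 * real (Suc (Suc n)) * a = 2 * real (Suc n) * a + 2 * a" by (simp add: algebra_simps)
    moreover have "2 * real (Suc n) * a - 2 * a = 2 * real n * a" by (simp add: algebra_simps)
    ultimately show ?thesis using sin_rec[of "2 * real (Suc n) * a" "2 * a"] by simp
  qed
  have "poly (Qp (Suc (Suc n))) (2 * sin a) * sin (2 * a) =
     (2 - (2 * sin a)^2) * (poly (Qp (Suc n)) (2 * sin a) * sin (2 * a)) - poly (Qp n) (2 * sin a) * sin (2 * a)"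
    unfolding poly_Qp_rec by (simp add: algebra_simps)
  also have "\<dots> = sin (2 * real (Suc (Suc n)) * a)" unfolding IH1 IH2 two_minus_sq s ..
  finally show ?case using IH2 by blast
qed

lemma P_trig: "poly (Pp n) (2 * sin a) * sin a = sin ((2 * real n - 1) * a) \<and>
  poly (Pp (Suc n)) (2 * sin a) * sin a = sin ((2 * real (Suc n) - 1) * a)"
proof (induction n)
  case 0 then show ?case by simp
next
  case (Suc n)
  have IH1: "poly (Pp n) (2 * sin a) * sin a = sin ((2 * real n - 1) * a)"
   and IH2: "poly (Pp (Suc n)) (2 * sin a) * sin a = sin ((2 * real (Suc n) - 1) * a)" using Suc by blast+
  have s: "sin ((2 * real (Suc (Suc n)) - 1) * a) = 2 * cos (2 * a) * sin ((2 * real (Suc n) - 1) * a) - sin ((2 * real n - 1) * a)"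
  proof -
    have "(2 * real (Suc (Suc n)) - 1) * a = (2 * real (Suc n) - 1) * a + 2 * a" by (simp add: algebra_simps)
    moreover have "(2 * real (Suc n) - 1) * a - 2 * a = (2 * real n - 1) * a" by (simp add: algebra_simps)
    ultimately show ?thesis using sin_rec[of "(2 * real (Suc n) - 1) * a" "2 * a"] by simp
  qed
  have "poly (Pp (Suc (Suc n))) (2 * sin a) * sin a =
     (2 - (2 * sin a)^2) * (poly (Pp (Suc n)) (2 * sin a) * sin a) - poly (Pp n) (2 * sin a) * sin a"
    unfolding poly_Pp_rec by (simp add: algebra_simps)
  also have "\<dots> = sin ((2 * real (Suc (Suc n)) - 1) * a)" unfolding IH1 IH2 two_minus_sq s ..
  finally show ?case using IH2 by blast
qed



lemma poly_map_of_real: "poly (map_poly complex_of_real R) (complex_of_real x) = complex_of_real (poly R x)"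
  by (induction R) (auto simp: map_poly_pCons)

lemma even_roots:
  fixes R :: "real poly" and f :: "nat \<Rightarrow> real"
  assumes R0: "R \<noteq> 0" and deg: "degree R = 2 * m" and ev: "\<And>x. poly R (-x) = poly R x"
    and fpos: "\<And>k. k \<in> {1..m} \<Longrightarrow> 0 < f k" and froot: "\<And>k. k \<in> {1..m} \<Longrightarrow> poly R (f k) = 0"
    and fmono: "\<And>i j. 1 \<le> i \<Longrightarrow> i < j \<Longrightarrow> j \<le> m \<Longrightarrow> f i < f j"
  shows "{A. 0 < A \<and> poly R A = 0} = f ` {1..m}"
    and "{A. A < 0 \<and> poly R A = 0} = (\<lambda>k. - f k) ` {1..m}"
    and "card (f ` {1..m}) = m" and "card ((\<lambda>k. - f k) ` {1..m}) = m"
    and "\<forall>z. poly (map_poly complex_of_real R) z = 0 \<longrightarrow>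
          Im z = 0 \<and> order z (map_poly complex_of_real R) = 1"
proof -
  have inj: "inj_on f {1..m}"
  proof (rule inj_onI)
    fix i j assume "i \<in> {1..m}" "j \<in> {1..m}" "f i = f j"
    then show "i = j" using fmono[of i j] fmono[of j i] by (cases "i < j"; cases "j < i") auto
  qed
  have inj2: "inj_on (\<lambda>k. - f k) {1..m}"
  proof (rule inj_onI)
    fix i j assume "i \<in> {1..m}" "j \<in> {1..m}" "- f i = - f j"
    then show "i = j" using inj_onD[OF inj] by simp
  qed
  show c1: "card (f ` {1..m}) = m" using card_image[OF inj] by simp
  show c2: "card ((\<lambda>k. - f k) ` {1..m}) = m" using card_image[OF inj2] by simp
  let ?S1 = "f ` {1..m}" and ?S2 = "(\<lambda>k. - f k) ` {1..m}"
  let ?S = "?S1 \<union> ?S2"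
  have disj: "?S1 \<inter> ?S2 = {}"
  proof (rule equals0I)
    fix x assume "x \<in> ?S1 \<inter> ?S2"
    then obtain i j where "i \<in> {1..m}" "j \<in> {1..m}" "x = f i" "x = - f j" by blast
    then show False using fpos[of i] fpos[of j] by simp
  qed
  have cS: "card ?S = 2 * m" using card_Un_disjoint[of ?S1 ?S2] disj c1 c2 by simp
  let ?Z = "{x. poly R x = 0}"
  have SZ: "?S \<subseteq> ?Z"
  proof
    fix x assume "x \<in> ?S"
    then obtain k where k: "k \<in> {1..m}" "x = f k \<or> x = - f k" by blast
    then show "x \<in> ?Z" using froot[OF k(1)] ev[of "f k"] by auto
  qed
  have fZ: "finite ?Z" by (rule poly_roots_finite[OF R0])
  have cZ: "card ?Z \<le> 2 * m" using card_poly_roots_bound[OF R0] deg by simp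
  have SZe: "?S = ?Z" by (rule card_subset_eq[OF fZ SZ]) (use cS cZ card_mono[OF fZ SZ] in simp)
  show "{A. 0 < A \<and> poly R A = 0} = ?S1"
  proof -
    have "{A. 0 < A \<and> poly R A = 0} = {A \<in> ?Z. 0 < A}" by auto
    also have "\<dots> = {A \<in> ?S. 0 < A}" using SZe by simp
    also have "\<dots> = ?S1" using fpos by fastforce
    finally show ?thesis .
  qed
  show "{A. A < 0 \<and> poly R A = 0} = ?S2"
  proof -
    have "{A. A < 0 \<and> poly R A = 0} = {A \<in> ?Z. A < 0}" by auto
    also have "\<dots> = {A \<in> ?S. A < 0}" using SZe by simp
    also have "\<dots> = ?S2" using fpos by fastforce
    finally show ?thesis .
  qed
  let ?Rc = "map_poly complex_of_real R"
  have Rc0: "?Rc \<noteq> 0" using R0 by (simp add: map_poly_eq_0_iff)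
  have dRc: "degree ?Rc = 2 * m" using deg by (simp add: degree_map_poly)
  let ?Sc = "complex_of_real ` ?S"
  have cSc: "card ?Sc = 2 * m" using cS card_image[of complex_of_real ?S] inj_of_real
    by (metis inj_on_subset subset_UNIV)
  let ?Zc = "{z. poly ?Rc z = 0}"
  have ScZ: "?Sc \<subseteq> ?Zc"
  proof
    fix z assume "z \<in> ?Sc"
    then obtain x where x: "x \<in> ?S" "z = complex_of_real x" by blast
    then have "poly R x = 0" using SZ by blast
    then show "z \<in> ?Zc" using x(2) poly_map_of_real[of R x] by simp
  qed
  have fZc: "finite ?Zc" by (rule poly_roots_finite[OF Rc0])
  have cZc: "card ?Zc \<le> 2 * m" using card_poly_roots_bound[OF Rc0] dRc by simp
  have ScZe: "?Sc = ?Zc" by (rule card_subset_eq[OF fZc ScZ]) (use cSc cZc card_mono[OF fZc ScZ] in simp)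
  show "\<forall>z. poly ?Rc z = 0 \<longrightarrow> Im z = 0 \<and> order z ?Rc = 1"
  proof (intro allI impI conjI)
    fix z assume zr: "poly ?Rc z = 0"
    then have zS: "z \<in> ?Sc" using ScZe by auto
    then show "Im z = 0" by auto
    have o1: "order z ?Rc > 0" using zr Rc0 order_gt_0_iff by blast
    have "\<not> order z ?Rc \<ge> 2"
    proof
      assume "order z ?Rc \<ge> 2"
      then have "[:-z, 1:] ^ 2 dvd ?Rc" using order_divides by blast
      then obtain q where q: "?Rc = [:-z, 1:] ^ 2 * q" by (elim dvdE)
      have q0: "q \<noteq> 0" using Rc0 q by auto
      have dq: "degree ?Rc = 2 + degree q"
        unfolding q by (subst degree_mult_eq) (use q0 in \<open>auto simp: degree_linear_power\<close>)
      have sub: "?Sc - {z} \<subseteq> {w. poly q w = 0}"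
      proof
        fix w assume w: "w \<in> ?Sc - {z}"
        then have "poly ?Rc w = 0" using ScZ by auto
        then have "(w - z)^2 * poly q w = 0" unfolding q by (simp add: algebra_simps)
        then show "w \<in> {w. poly q w = 0}" using w by auto
      qed
      have "card (?Sc - {z}) = 2 * m - 1" using cSc zS
        by (simp add: card_Diff_singleton_if)
      moreover have "card (?Sc - {z}) \<le> degree q"
        using card_mono[OF poly_roots_finite[OF q0] sub] card_poly_roots_bound[OF q0] by linarith
      moreover have "m \<ge> 1" using zS by (cases m) auto
      ultimately show False using dq dRc by linarith
    qed
    then show "order z ?Rc = 1" using o1 by linarith
  qed
qed

lemma interlace:
  fixes h g :: "nat \<Rightarrow> real"
  assumes hm: "\<And>i j. 1 \<le> i \<Longrightarrow> i < j \<Longrightarrow> j \<le> N \<Longrightarrow> h i < h j"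
    and lo: "\<And>k. 1 \<le> k \<Longrightarrow> k < N \<Longrightarrow> h k < g k"
    and hi: "\<And>k. 1 \<le> k \<Longrightarrow> k < N \<Longrightarrow> g k < h (Suc k)"
  shows "separated_by (h ` {1..N}) (g ` {1..<N})"
proof -
  have hle: "h i \<le> h j" if "1 \<le> i" "i \<le> j" "j \<le> N" for i j
    using hm[of i j] that by (cases "i = j") auto
  have disj: "h ` {1..N} \<inter> g ` {1..<N} = {}"
  proof (rule ccontr)
    assume "h ` {1..N} \<inter> g ` {1..<N} \<noteq> {}"
    then obtain i k where ik: "i \<in> {1..N}" "k \<in> {1..<N}" "h i = g k" by blast
    show False
    proof (cases "i \<le> k")
      case True then show ?thesis using hle[of i k] lo[of k] ik by auto
    next
      case False then show ?thesis using hle[of "Suc k" i] hi[of k] ik by auto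
    qed
  qed
  have betw: "\<forall>r\<in>g ` {1..<N}. \<exists>a\<in>h ` {1..N}. \<exists>b\<in>h ` {1..N}. a < r \<and> r < b"
  proof
    fix r assume "r \<in> g ` {1..<N}"
    then obtain k where k: "k \<in> {1..<N}" "r = g k" by blast
    then show "\<exists>a\<in>h ` {1..N}. \<exists>b\<in>h ` {1..N}. a < r \<and> r < b"
      using lo[of k] hi[of k] by (intro bexI[of _ "h k"] bexI[of _ "h (Suc k)"]) auto
  qed
  have cons: "\<forall>a\<in>h ` {1..N}. \<forall>b\<in>h ` {1..N}. a < b \<and> h ` {1..N} \<inter> {a<..<b} = {} \<longrightarrow>
        card (g ` {1..<N} \<inter> {a<..<b}) = 1"
  proof (intro ballI impI)
    fix a b assume a: "a \<in> h ` {1..N}" and b: "b \<in> h ` {1..N}" and ab: "a < b \<and> h ` {1..N} \<inter> {a<..<b} = {}"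
    obtain i where i: "i \<in> {1..N}" "a = h i" using a by blast
    obtain j where j: "j \<in> {1..N}" "b = h j" using b by blast
    have ij: "i < j" using hle[of j i] i j ab by (cases "i < j") auto
    have j1: "j = Suc i"
    proof (rule ccontr)
      assume "j \<noteq> Suc i"
      then have "Suc i < j" using ij by simp
      then have "h (Suc i) \<in> h ` {1..N} \<inter> {a<..<b}" using hm[of i "Suc i"] hm[of "Suc i" j] i j by auto
      then show False using ab by blast
    qed
    have "g ` {1..<N} \<inter> {a<..<b} = {g i}"
    proof
      show "{g i} \<subseteq> g ` {1..<N} \<inter> {a<..<b}" using i j j1 lo[of i] hi[of i] by auto
      show "g ` {1..<N} \<inter> {a<..<b} \<subseteq> {g i}"
      proof
        fix r assume "r \<in> g ` {1..<N} \<inter> {a<..<b}"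
        then obtain k where k: "k \<in> {1..<N}" "r = g k" "h i < g k" "g k < h (Suc i)" using i j j1 by auto
        have "k = i"
        proof (rule ccontr)
          assume "k \<noteq> i"
          then consider "k < i" | "i < k" by linarith
          then show False
          proof cases
            case 1 then show ?thesis using hle[of "Suc k" i] hi[of k] k i by auto
          next
            case 2 then show ?thesis using hle[of "Suc i" k] lo[of k] k i by auto
          qed
        qed
        then show "r \<in> {g i}" using k by simp
      qed
    qed
    then show "card (g ` {1..<N} \<inter> {a<..<b}) = 1" by simp
  qed
  show ?thesis unfolding separated_by_def using disj betw cons by auto
qed



definition fQ :: "nat \<Rightarrow> nat \<Rightarrow> real" where
  "fQ n k = 2 * sin (real k * pi / (2 * real n))"
definition fP :: "nat \<Rightarrow> nat \<Rightarrow> real" where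
  "fP n k = 2 * sin (real k * pi / (2 * real n - 1))"

lemma sin_lt2: "0 \<le> x \<Longrightarrow> x < y \<Longrightarrow> y \<le> pi / 2 \<Longrightarrow> 2 * sin x < 2 * sin y"
  using sin_monotone_2pi[of x y] by simp

lemma ang_lt: "0 < b \<Longrightarrow> 0 < d \<Longrightarrow> x * d < y * b \<Longrightarrow> x * pi / b < y * pi / (d::real)"
proof -
  assume b: "0 < b" and d: "0 < d" and xy: "x * d < y * b"
  have "x / b < y / d" using b d xy by (simp add: field_simps)
  then have "(x / b) * pi < (y / d) * pi" by (rule mult_strict_right_mono) (rule pi_gt_zero)
  then show ?thesis by simp
qed

lemma ang_le: "0 < b \<Longrightarrow> x * 2 \<le> b \<Longrightarrow> x * pi / b \<le> pi / 2"
proof -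
  assume b: "0 < b" and xb: "x * 2 \<le> b"
  have "x / b \<le> 1 / 2" using b xb by (simp add: field_simps)
  then have "(x / b) * pi \<le> (1 / 2) * pi" by (rule mult_right_mono) (use pi_gt_zero in simp)
  then show ?thesis by simp
qed

lemma ang_pos: "0 < b \<Longrightarrow> 0 < x \<Longrightarrow> 0 < x * pi / (b::real)"
  by simp

lemma fQ_mono: "1 \<le> i \<Longrightarrow> i < j \<Longrightarrow> j \<le> n \<Longrightarrow> fQ n i < fQ n j"
proof -
  assume a: "1 \<le> i" "i < j" "j \<le> n"
  have n: "0 < 2 * real n" using a by simp
  have 1: "real i * pi / (2 * real n) < real j * pi / (2 * real n)"
    by (rule ang_lt[OF n n]) (use a n in simp)
  have 2: "real j * pi / (2 * real n) \<le> pi / 2"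
    by (rule ang_le[OF n]) (use a in simp)
  show ?thesis unfolding fQ_def by (rule sin_lt2[OF _ 1 2]) simp
qed

lemma fP_mono: "1 \<le> i \<Longrightarrow> i < j \<Longrightarrow> j < n \<Longrightarrow> fP n i < fP n j"
proof -
  assume a: "1 \<le> i" "i < j" "j < n"
  have n: "0 < 2 * real n - 1" using a by simp
  have 1: "real i * pi / (2 * real n - 1) < real j * pi / (2 * real n - 1)"
    by (rule ang_lt[OF n n]) (use a n in simp)
  have 2: "real j * pi / (2 * real n - 1) \<le> pi / 2"
    by (rule ang_le[OF n]) (use a in simp)
  show ?thesis unfolding fP_def by (rule sin_lt2[OF _ 1 2]) (use n in simp)
qed

lemma fQ_pos: "1 \<le> k \<Longrightarrow> k \<le> n \<Longrightarrow> 0 < fQ n k"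
proof -
  assume k: "1 \<le> k" "k \<le> n"
  have "sin (real k * pi / (2 * real n)) > 0"
    by (rule sin_gt_zero) (use k in \<open>auto intro!: ang_pos le_less_trans[OF ang_le]\<close>)
  then show ?thesis unfolding fQ_def by simp
qed

lemma fP_pos: "1 \<le> k \<Longrightarrow> k < n \<Longrightarrow> 0 < fP n k"
proof -
  assume k: "1 \<le> k" "k < n"
  have "sin (real k * pi / (2 * real n - 1)) > 0"
    by (rule sin_gt_zero) (use k in \<open>auto intro!: ang_pos le_less_trans[OF ang_le]\<close>)
  then show ?thesis unfolding fP_def by simp
qed

lemma fQ_root: "1 \<le> k \<Longrightarrow> k < n \<Longrightarrow> poly (Qp n) (fQ n k) = 0"
proof -
  assume k: "1 \<le> k" "k < n"
  define a where "a = real k * pi / (2 * real n)"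
  have s0: "sin (2 * a) > 0"
  proof (rule sin_gt_zero)
    show "0 < 2 * a" using k by (simp add: a_def)
    have "real k * pi / (2 * real n) < 1 * pi / 2" by (rule ang_lt) (use k in simp_all)
    then show "2 * a < pi" by (simp add: a_def)
  qed
  have "sin (2 * real n * a) = sin (real k * pi)" using k by (simp add: a_def field_simps)
  also have "\<dots> = 0" by (rule sin_npi)
  finally have "poly (Qp n) (2 * sin a) * sin (2 * a) = 0" using Q_trig[of n a] by simp
  then show ?thesis using s0 unfolding fQ_def a_def by simp
qed

lemma fP_root: "1 \<le> k \<Longrightarrow> k < n \<Longrightarrow> poly (Pp n) (fP n k) = 0"
proof -
  assume k: "1 \<le> k" "k < n"
  define a where "a = real k * pi / (2 * real n - 1)"
  have s0: "sin a > 0"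
    using fP_pos[OF k] unfolding fP_def a_def by simp
  have nz: "2 * real n - 1 \<noteq> 0" using k by simp
  have "sin ((2 * real n - 1) * a) = sin (real k * pi)" using nz by (simp add: a_def)
  also have "\<dots> = 0" by (rule sin_npi)
  finally have "poly (Pp n) (2 * sin a) * sin a = 0" using P_trig[of n a] by simp
  then show ?thesis using s0 unfolding fP_def a_def by simp
qed



lemma Q_facts:
  assumes "n \<ge> 1"
  shows "{A. 0 < A \<and> poly (Qp n) A = 0} = fQ n ` {1..<n}" and "even_real_simple_roots (Qp n) n"
proof -
  obtain m where n: "n = Suc m" using assms by (cases n) auto
  have R0: "Qp n \<noteq> 0" and deg: "degree (Qp n) = 2 * m" using Qp_props n by auto
  have ev: "\<And>x. poly (Qp n) (-x) = poly (Qp n) x" using Qp_props by auto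
  have fpos: "\<And>k. k \<in> {1..m} \<Longrightarrow> 0 < fQ n k" using fQ_pos n by auto
  have froot: "\<And>k. k \<in> {1..m} \<Longrightarrow> poly (Qp n) (fQ n k) = 0" using fQ_root n by auto
  have fmono: "\<And>i j. 1 \<le> i \<Longrightarrow> i < j \<Longrightarrow> j \<le> m \<Longrightarrow> fQ n i < fQ n j" using fQ_mono n by auto
  note R = even_roots[OF R0 deg ev fpos froot fmono]
  have I: "{1..<n} = {1..m}" using n by auto
  show "{A. 0 < A \<and> poly (Qp n) A = 0} = fQ n ` {1..<n}" using R(1) I by simp
  show "even_real_simple_roots (Qp n) n"
    unfolding even_real_simple_roots_def using R0 ev deg R n by simp
qed

lemma P_facts:
  assumes "n \<ge> 1"
  shows "{A. 0 < A \<and> poly (Pp n) A = 0} = fP n ` {1..<n}" and "even_real_simple_roots (Pp n) n"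
proof -
  obtain m where n: "n = Suc m" using assms by (cases n) auto
  have R0: "Pp n \<noteq> 0" and deg: "degree (Pp n) = 2 * m" using Pp_props n by auto
  have ev: "\<And>x. poly (Pp n) (-x) = poly (Pp n) x" using Pp_props by auto
  have fpos: "\<And>k. k \<in> {1..m} \<Longrightarrow> 0 < fP n k" using fP_pos n by auto
  have froot: "\<And>k. k \<in> {1..m} \<Longrightarrow> poly (Pp n) (fP n k) = 0" using fP_root n by auto
  have fmono: "\<And>i j. 1 \<le> i \<Longrightarrow> i < j \<Longrightarrow> j \<le> m \<Longrightarrow> fP n i < fP n j" using fP_mono n by auto
  note R = even_roots[OF R0 deg ev fpos froot fmono]
  have I: "{1..<n} = {1..m}" using n by auto
  show "{A. 0 < A \<and> poly (Pp n) A = 0} = fP n ` {1..<n}" using R(1) I by simp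
  show "even_real_simple_roots (Pp n) n"
    unfolding even_real_simple_roots_def using R0 ev deg R n by simp
qed

lemma p_even_eq: "n \<ge> 1 \<Longrightarrow> p (2 * n) A = (2 - A) * poly (Qp n) A"
proof -
  assume "n \<ge> 1"
  then obtain m where n: "n = Suc m" by (cases n) auto
  have "2 * n = 2 * m + 2" using n by simp
  then show ?thesis using pd_even[of m A] n by (simp add: p_pd)
qed

lemma p_odd_eq: "n \<ge> 1 \<Longrightarrow> p (2 * n - 1) A = poly (Pp n) A"
proof -
  assume "n \<ge> 1"
  then obtain m where n: "n = Suc m" by (cases n) auto
  have "2 * n - 1 = 2 * m + 1" using n by simp
  then show ?thesis using pd_odd[of m A] n by (simp add: p_pd)
qed

lemma fQ_n: "n \<ge> 1 \<Longrightarrow> fQ n n = 2"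
  unfolding fQ_def by simp

lemma fQ_lt2: "1 \<le> k \<Longrightarrow> k < n \<Longrightarrow> fQ n k < 2"
  using fQ_mono[of k n n] fQ_n[of n] by simp

theorem theorem5p2:
  shows "(\<forall>n\<ge>2.
            separated_by {A. 0 < A \<and> p (2*n) A = 0} {A. 0 < A \<and> p (2*n - 1) A = 0} \<and>
            separated_by {A. 0 < A \<and> p (2*n + 1) A = 0} {A. 0 < A \<and> A < 2 \<and> p (2*n) A = 0})
       \<and> (\<forall>n\<ge>1. \<exists>Q P :: real poly.
            (\<forall>A. poly Q A * (2 - A) = p (2*n) A) \<and>
            (\<forall>A. poly P A = p (2*n - 1) A) \<and>
            even_real_simple_roots Q n \<and> even_real_simple_roots P n)"
proof (intro conjI allI impI)
  fix n :: nat assume n: "n \<ge> 1"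
  show "\<exists>Q P :: real poly.
            (\<forall>A. poly Q A * (2 - A) = p (2*n) A) \<and>
            (\<forall>A. poly P A = p (2*n - 1) A) \<and>
            even_real_simple_roots Q n \<and> even_real_simple_roots P n"
    by (rule exI[of _ "Qp n"], rule exI[of _ "Pp n"])
       (use n p_even_eq p_odd_eq Q_facts(2) P_facts(2) in auto)
next
  fix n :: nat assume n: "n \<ge> 2"
  have n1: "n \<ge> 1" using n by simp
  have R1a: "{A. 0 < A \<and> p (2*n) A = 0} = fQ n ` {1..n}"
  proof -
    have "{A. 0 < A \<and> p (2*n) A = 0} = insert 2 {A. 0 < A \<and> poly (Qp n) A = 0}"
      using p_even_eq[OF n1] by auto
    also have "\<dots> = insert (fQ n n) (fQ n ` {1..<n})" using Q_facts(1)[OF n1] fQ_n[OF n1] by simp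
    also have "\<dots> = fQ n ` {1..n}" using n1 by (auto simp: image_iff) (metis atLeastLessThan_iff le_neq_implies_less)
    finally show ?thesis .
  qed
  have R2a: "{A. 0 < A \<and> p (2*n - 1) A = 0} = fP n ` {1..<n}"
    using P_facts(1)[OF n1] p_odd_eq[OF n1] by simp
  have R1b: "{A. 0 < A \<and> p (2*n + 1) A = 0} = fP (Suc n) ` {1..n}"
  proof -
    have "2 * n + 1 = 2 * Suc n - 1" by simp
    then have "{A. 0 < A \<and> p (2*n + 1) A = 0} = {A. 0 < A \<and> poly (Pp (Suc n)) A = 0}"
      using p_odd_eq[of "Suc n"] by simp
    also have "\<dots> = fP (Suc n) ` {1..<Suc n}" using P_facts(1)[of "Suc n"] by simp
    finally show ?thesis by (simp add: atLeastLessThanSuc_atLeastAtMost)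
  qed
  have R2b: "{A. 0 < A \<and> A < 2 \<and> p (2*n) A = 0} = fQ n ` {1..<n}"
  proof -
    have "{A. 0 < A \<and> A < 2 \<and> p (2*n) A = 0} = {A. A < 2 \<and> (0 < A \<and> poly (Qp n) A = 0)}"
      using p_even_eq[OF n1] by auto
    also have "\<dots> = {A \<in> fQ n ` {1..<n}. A < 2}" using Q_facts(1)[OF n1] by auto
    also have "\<dots> = fQ n ` {1..<n}" using fQ_lt2 by auto
    finally show ?thesis .
  qed
  have real_n: "real n \<ge> 2" using n by simp
  have s1: "separated_by (fQ n ` {1..n}) (fP n ` {1..<n})"
  proof (rule interlace)
    show "\<And>i j. 1 \<le> i \<Longrightarrow> i < j \<Longrightarrow> j \<le> n \<Longrightarrow> fQ n i < fQ n j" by (rule fQ_mono)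
  next
    fix k assume k: "1 \<le> k" "k < n"
    have b: "0 < 2 * real n" "0 < 2 * real n - 1" using n by auto
    have le1: "real k * pi / (2 * real n - 1) \<le> pi / 2" by (rule ang_le[OF b(2)]) (use k in simp)
    have le2: "real (Suc k) * pi / (2 * real n) \<le> pi / 2" by (rule ang_le[OF b(1)]) (use k in simp)
    show "fQ n k < fP n k" unfolding fQ_def fP_def
      by (rule sin_lt2[OF _ ang_lt[OF b(1) b(2)] le1]) (use k in \<open>simp_all add: algebra_simps\<close>)
    have "real k * (2 * real n) < real (Suc k) * (2 * real n - 1)"
    proof -
      have "real k + 1 < 2 * real n" using k by linarith
      then show ?thesis by (simp add: algebra_simps)
    qed
    then show "fP n k < fQ n (Suc k)" unfolding fQ_def fP_def
      by (intro sin_lt2[OF _ ang_lt[OF b(2) b(1)] le2]) (use b in simp_all)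
  qed
  have s2: "separated_by (fP (Suc n) ` {1..n}) (fQ n ` {1..<n})"
  proof (rule interlace)
    show "\<And>i j. 1 \<le> i \<Longrightarrow> i < j \<Longrightarrow> j \<le> n \<Longrightarrow> fP (Suc n) i < fP (Suc n) j"
      by (rule fP_mono) auto
  next
    fix k assume k: "1 \<le> k" "k < n"
    have b: "0 < 2 * real n" "0 < 2 * real (Suc n) - 1" using n by auto
    have le1: "real k * pi / (2 * real n) \<le> pi / 2" by (rule ang_le[OF b(1)]) (use k in simp)
    have le2: "real (Suc k) * pi / (2 * real (Suc n) - 1) \<le> pi / 2" by (rule ang_le[OF b(2)]) (use k in simp)
    show "fP (Suc n) k < fQ n k" unfolding fQ_def fP_def
      by (rule sin_lt2[OF _ ang_lt[OF b(2) b(1)] le1]) (use k in \<open>simp_all add: algebra_simps\<close>)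
    have "real k * (2 * real (Suc n) - 1) < real (Suc k) * (2 * real n)"
    proof -
      have "real k < 2 * real n" using k by linarith
      then show ?thesis by (simp add: algebra_simps)
    qed
    then show "fQ n k < fP (Suc n) (Suc k)" unfolding fQ_def fP_def
      by (intro sin_lt2[OF _ ang_lt[OF b(1) b(2)] le2]) (use b in simp_all)
  qed
  show "separated_by {A. 0 < A \<and> p (2*n) A = 0} {A. 0 < A \<and> p (2*n - 1) A = 0}"
    using s1 R1a R2a by simp
  show "separated_by {A. 0 < A \<and> p (2*n + 1) A = 0} {A. 0 < A \<and> A < 2 \<and> p (2*n) A = 0}"
    using s2 R1b R2b by simp
qed

end
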